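(* Let $X_1,X_2,\dots$ be i.i.d. copies of a random variable $X$ with values in $[0,C]$, let $r:[0,C]\to[E,D]$ be measurable with $E\le0\le D$, and let $\lambda>0$. Let $c^*$ be the unique root on $\mathbb{R}_+$ of $\Phi(c)=\lambda\,\mathbb{E}[(r(X)-cX)_+]-c$, and for $n\ge1$ let $c_n$ be the unique root on $\mathbb{R}_+$ of $$\Phi_n(c)=\lambda\frac1n\sum_{i=1}^n (r(X_i)-cX_i)_+-c.$$ Then for all $\delta\in(0,1]$ and $n\ge1$, $$\mathbb{P}\Big(c_n-c^*>\lambda(D-E)\sqrt{\tfrac{\ln(1/\delta)}{2n}}\Big)\le\delta.$$
   Context: $(z)_+=\max\{z,0\}$. *)

theory Defs
  imports "HOL-Probability.Probability"
begin

definition pos_part :: "real \<Rightarrow> real" where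
  "pos_part z = max z 0"

definition Phi :: "'a measure \<Rightarrow> real \<Rightarrow> (real \<Rightarrow> real) \<Rightarrow> ('a \<Rightarrow> real) \<Rightarrow> real \<Rightarrow> real" where
  "Phi M lam r X c = lam * (\<integral>\<omega>. pos_part (r (X \<omega>) - c * X \<omega>) \<partial>M) - c"

definition Phi_emp :: "real \<Rightarrow> (real \<Rightarrow> real) \<Rightarrow> nat \<Rightarrow> (nat \<Rightarrow> real) \<Rightarrow> real \<Rightarrow> real" where
  "Phi_emp lam r n x c = lam * ((1 / real n) * (\<Sum>i<n. pos_part (r (x i) - c * x i))) - c"

definition nonneg_root :: "(real \<Rightarrow> real) \<Rightarrow> real" where
  "nonneg_root f = (THE c. c \<ge> 0 \<and> f c = 0)"

end

theory Submission
  imports Defs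
begin

lemma pos_part_mono: "a \<le> b \<Longrightarrow> pos_part a \<le> pos_part b"
  by (simp add: pos_part_def)

lemma pos_part_nonneg: "0 \<le> pos_part a"
  by (simp add: pos_part_def)

lemma pos_part_lip: "pos_part a \<le> pos_part b + \<bar>a - b\<bar>"
  by (simp add: pos_part_def)

lemma root_lemma:
  fixes f :: "real \<Rightarrow> real"
  assumes cont: "continuous_on {0..} f" and f0: "f 0 \<ge> 0"
    and dec: "\<And>a b. 0 \<le> a \<Longrightarrow> a \<le> b \<Longrightarrow> f b \<le> f a - (b - a)"
  shows "nonneg_root f \<ge> 0 \<and> f (nonneg_root f) = 0"
    and "\<And>a. 0 \<le> a \<Longrightarrow> (nonneg_root f > a \<longleftrightarrow> f a > 0)"
proof -
  have "f (f 0) \<le> f 0 - (f 0 - 0)" using dec[of 0 "f 0"] f0 by blast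
  then have ff: "f (f 0) \<le> 0" by linarith
  have "continuous_on {0..f 0} f" using cont by (rule continuous_on_subset) auto
  then obtain c where c: "0 \<le> c" "f c = 0"
    using IVT2'[of f "f 0" 0 0] f0 ff by blast
  have uniq: "d = c" if "0 \<le> d" "f d = 0" for d
  proof (rule ccontr)
    assume "d \<noteq> c"
    then consider "d < c" | "c < d" by linarith
    then show False
    proof cases
      case 1
      then have "f c \<le> f d - (c - d)" using dec[of d c] that by linarith
      then show ?thesis using 1 that c by linarith
    next
      case 2
      then have "f d \<le> f c - (d - c)" using dec[of c d] c by linarith
      then show ?thesis using 2 that c by linarith
    qed
  qed
  have eq: "nonneg_root f = c"
    unfolding nonneg_root_def
  proof (rule the_equality)
    show "0 \<le> c \<and> f c = 0" using c by blast
    show "\<And>d. 0 \<le> d \<and> f d = 0 \<Longrightarrow> d = c" using uniq by blast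
  qed
  show "nonneg_root f \<ge> 0 \<and> f (nonneg_root f) = 0" using eq c by simp
  fix a :: real assume a: "0 \<le> a"
  show "nonneg_root f > a \<longleftrightarrow> f a > 0"
  proof
    assume "nonneg_root f > a"
    then have "a < c" using eq by simp
    then have "f c \<le> f a - (c - a)" using dec[of a c] a by linarith
    then show "f a > 0" using \<open>a < c\<close> c by linarith
  next
    assume fa: "f a > 0"
    show "nonneg_root f > a"
    proof (rule ccontr)
      assume "\<not> nonneg_root f > a"
      then have "c \<le> a" using eq by simp
      then have "f a \<le> f c - (a - c)" using dec[of c a] c by linarith
      then show False using \<open>c \<le> a\<close> c fa by linarith
    qed
  qed
qed


lemma arith_bound:
  fixes z w E D K :: real
  assumes "E \<le> z" "z \<le> D" "E \<le> 0" "0 \<le> D" "\<bar>w\<bar> \<le> K"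
  shows "\<bar>pos_part (z - w)\<bar> \<le> D - E + K"
proof (cases "z - w \<le> 0")
  case True
  have "0 \<le> K" using assms(5) by linarith
  then show ?thesis using True assms by (simp add: pos_part_def max_def)
next
  case False
  have "- K \<le> w" using assms(5) by linarith
  then show ?thesis using False assms by (simp add: pos_part_def max_def)
qed

lemma lip_pt:
  fixes z x c c' C :: real
  assumes "0 \<le> x" "x \<le> C"
  shows "pos_part (z - c * x) \<le> pos_part (z - c' * x) + \<bar>c - c'\<bar> * C"
proof -
  have "\<bar>(z - c * x) - (z - c' * x)\<bar> = \<bar>c - c'\<bar> * x"
    using assms by (simp add: abs_mult left_diff_distrib[symmetric] abs_minus_commute)
  also have "\<dots> \<le> \<bar>c - c'\<bar> * C" using assms by (simp add: mult_left_mono)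
  finally show ?thesis using pos_part_lip[of "z - c * x" "z - c' * x"] by linarith
qed

lemma mono_pt:
  fixes z x a b :: real
  assumes "0 \<le> x" "a \<le> b"
  shows "pos_part (z - b * x) \<le> pos_part (z - a * x)"
proof -
  have "a * x \<le> b * x" using assms by (simp add: mult_right_mono)
  then show ?thesis by (intro pos_part_mono) linarith
qed

lemma Phi_emp_props:
  fixes x :: "nat \<Rightarrow> real"
  assumes "lam > 0" "\<And>i. 0 \<le> x i"
  shows "continuous_on {0..} (Phi_emp lam r n x)" "Phi_emp lam r n x 0 \<ge> 0"
    "\<And>a b. 0 \<le> a \<Longrightarrow> a \<le> b \<Longrightarrow> Phi_emp lam r n x b \<le> Phi_emp lam r n x a - (b - a)"
proof -
  show "continuous_on {0..} (Phi_emp lam r n x)"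
    unfolding Phi_emp_def pos_part_def by (intro continuous_intros)
  have "(\<Sum>i<n. pos_part (r (x i) - 0 * x i)) \<ge> 0" by (intro sum_nonneg pos_part_nonneg)
  then show "Phi_emp lam r n x 0 \<ge> 0" unfolding Phi_emp_def using assms(1) by simp
  fix a b :: real assume ab: "0 \<le> a" "a \<le> b"
  have "(\<Sum>i<n. pos_part (r (x i) - b * x i)) \<le> (\<Sum>i<n. pos_part (r (x i) - a * x i))"
    by (intro sum_mono mono_pt assms(2) ab)
  then have "(1 / real n) * (\<Sum>i<n. pos_part (r (x i) - b * x i)) \<le> (1 / real n) * (\<Sum>i<n. pos_part (r (x i) - a * x i))"
    by (rule mult_left_mono) simp_all
  then have "lam * ((1 / real n) * (\<Sum>i<n. pos_part (r (x i) - b * x i))) \<le> lam * ((1 / real n) * (\<Sum>i<n. pos_part (r (x i) - a * x i)))"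
    by (rule mult_left_mono) (use assms(1) in simp)
  then show "Phi_emp lam r n x b \<le> Phi_emp lam r n x a - (b - a)"
    unfolding Phi_emp_def by linarith
qed

theorem proposition3p1:
  fixes M :: "'a measure" and X :: "'a \<Rightarrow> real" and Xs :: "nat \<Rightarrow> 'a \<Rightarrow> real"
    and r :: "real \<Rightarrow> real" and C E D lam \<delta> :: real and n :: nat
  assumes "prob_space M"
    and "X \<in> borel_measurable M"
    and "\<And>\<omega>. \<omega> \<in> space M \<Longrightarrow> X \<omega> \<in> {0..C}"
    and "\<And>i. Xs i \<in> borel_measurable M"
    and "\<And>i \<omega>. \<omega> \<in> space M \<Longrightarrow> Xs i \<omega> \<in> {0..C}"
    and "prob_space.indep_vars M (\<lambda>_. borel) Xs UNIV"
    and "\<And>i. distr M borel (Xs i) = distr M borel X"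
    and "r \<in> borel_measurable (restrict_space borel {0..C})"
    and "\<And>x. x \<in> {0..C} \<Longrightarrow> E \<le> r x \<and> r x \<le> D"
    and "E \<le> 0" and "0 \<le> D"
    and "lam > 0"
    and "0 < \<delta>" and "\<delta> \<le> 1"
    and "n \<ge> 1"
  shows "{\<omega> \<in> space M. nonneg_root (Phi_emp lam r n (\<lambda>i. Xs i \<omega>))
                          - nonneg_root (Phi M lam r X)
                        > lam * (D - E) * sqrt (ln (1 / \<delta>) / (2 * real n))} \<in> sets M
    \<and> measure M {\<omega> \<in> space M. nonneg_root (Phi_emp lam r n (\<lambda>i. Xs i \<omega>))
                          - nonneg_root (Phi M lam r X)
                        > lam * (D - E) * sqrt (ln (1 / \<delta>) / (2 * real n))} \<le> \<delta>"
proof -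
  interpret prob_space M by fact
  note Xm[measurable] = assms(2)
  note Xsm[measurable] = assms(4)
  define r' where "r' = (\<lambda>x. if x \<in> {0..C} then r x else 0)"
  have r'm[measurable]: "r' \<in> borel_measurable borel"
    using assms(8) measurable_restrict_space_iff[of "{0..C}" borel 0 borel r] unfolding r'_def by simp
  have rY: "(\<lambda>\<omega>. r (Y \<omega>)) \<in> borel_measurable M"
    if Ym: "Y \<in> borel_measurable M" and Yb: "\<And>\<omega>. \<omega> \<in> space M \<Longrightarrow> Y \<omega> \<in> {0..C}" for Y
  proof -
    have "(\<lambda>\<omega>. r' (Y \<omega>)) \<in> borel_measurable M" using r'm Ym by measurable
    moreover have "\<And>\<omega>. \<omega> \<in> space M \<Longrightarrow> r (Y \<omega>) = r' (Y \<omega>)" using Yb by (simp add: r'_def)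
    ultimately show ?thesis
      using measurable_cong[of M "\<lambda>\<omega>. r (Y \<omega>)" "\<lambda>\<omega>. r' (Y \<omega>)" borel] by simp
  qed
  have rX[measurable]: "(\<lambda>\<omega>. r (X \<omega>)) \<in> borel_measurable M" using rY assms(2,3) by blast
  have rXs[measurable]: "\<And>i. (\<lambda>\<omega>. r (Xs i \<omega>)) \<in> borel_measurable M" using rY assms(4,5) by blast
  have C0: "0 \<le> C"
  proof -
    obtain \<omega> where "\<omega> \<in> space M" using not_empty by blast
    then show ?thesis using assms(3) by force
  qed
  define h where "h = (\<lambda>c \<omega>. pos_part (r (X \<omega>) - c * X \<omega>))"
  have hm[measurable]: "h c \<in> borel_measurable M" for c unfolding h_def pos_part_def by measurable
  have hb: "\<bar>h c \<omega>\<bar> \<le> D - E + \<bar>c\<bar> * C" if "\<omega> \<in> space M" for c \<omega>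
  proof -
    have X: "0 \<le> X \<omega>" "X \<omega> \<le> C" using assms(3)[OF that] by auto
    have "\<bar>c * X \<omega>\<bar> \<le> \<bar>c\<bar> * C" using X by (simp add: abs_mult mult_left_mono)
    then show ?thesis unfolding h_def
      using assms(9)[of "X \<omega>"] assms(10,11) X by (intro arith_bound) auto
  qed
  have hint: "integrable M (h c)" for c
    by (rule integrable_const_bound[where B="D - E + \<bar>c\<bar> * C"]) (auto intro!: AE_I2 hb)
  have hlip: "integral\<^sup>L M (h c) \<le> integral\<^sup>L M (h c') + \<bar>c - c'\<bar> * C" for c c'
  proof -
    have "integral\<^sup>L M (h c) \<le> integral\<^sup>L M (\<lambda>\<omega>. h c' \<omega> + \<bar>c - c'\<bar> * C)"
    proof (rule integral_mono)
      show "integrable M (h c)" by (rule hint)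
      show "integrable M (\<lambda>\<omega>. h c' \<omega> + \<bar>c - c'\<bar> * C)" using hint[of c'] by simp
      show "h c \<omega> \<le> h c' \<omega> + \<bar>c - c'\<bar> * C" if "\<omega> \<in> space M" for \<omega>
        unfolding h_def using assms(3)[OF that] by (intro lip_pt) auto
    qed
    also have "\<dots> = integral\<^sup>L M (h c') + \<bar>c - c'\<bar> * C"
    proof -
      have "integral\<^sup>L M (\<lambda>\<omega>. h c' \<omega> + \<bar>c - c'\<bar> * C) = integral\<^sup>L M (h c') + integral\<^sup>L M (\<lambda>_. \<bar>c - c'\<bar> * C)"
        by (rule Bochner_Integration.integral_add) (auto intro: hint)
      then show ?thesis using prob_space by simp
    qed
    finally show ?thesis .
  qed
  have Phi_eq: "Phi M lam r X = (\<lambda>c. lam * integral\<^sup>L M (h c) - c)"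
    unfolding Phi_def h_def by simp
  have Phi_cont: "continuous_on {0..} (Phi M lam r X)"
  proof -
    have "(lam * C)-lipschitz_on {0..} (\<lambda>c. lam * integral\<^sup>L M (h c))"
    proof (rule lipschitz_onI)
      fix c c' :: real
      have "\<bar>integral\<^sup>L M (h c) - integral\<^sup>L M (h c')\<bar> \<le> \<bar>c - c'\<bar> * C"
        using hlip[of c c'] hlip[of c' c] by (auto simp: abs_minus_commute)
      then have "lam * \<bar>integral\<^sup>L M (h c) - integral\<^sup>L M (h c')\<bar> \<le> lam * (\<bar>c - c'\<bar> * C)"
        by (rule mult_left_mono) (use assms(12) in simp)
      then show "dist (lam * integral\<^sup>L M (h c)) (lam * integral\<^sup>L M (h c')) \<le> lam * C * dist c c'"
        using assms(12) by (simp add: dist_real_def abs_mult right_diff_distrib[symmetric] mult_ac)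
      show "0 \<le> lam * C" using C0 assms(12) by simp
    qed
    then have "continuous_on {0..} (\<lambda>c. lam * integral\<^sup>L M (h c))"
      by (rule lipschitz_on_continuous_on)
    then show ?thesis unfolding Phi_eq by (rule continuous_on_diff) (rule continuous_on_id)
  qed
  have Phi0: "Phi M lam r X 0 \<ge> 0"
  proof -
    have "integral\<^sup>L M (h 0) \<ge> 0" by (rule Bochner_Integration.integral_nonneg) (simp add: h_def pos_part_nonneg)
    then show ?thesis unfolding Phi_eq using assms(12) by simp
  qed
  have Phidec: "Phi M lam r X b \<le> Phi M lam r X a - (b - a)" if ab: "0 \<le> a" "a \<le> b" for a b
  proof -
    have "integral\<^sup>L M (h b) \<le> integral\<^sup>L M (h a)"
    proof (rule integral_mono)
      show "integrable M (h b)" by (rule hint)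
      show "integrable M (h a)" by (rule hint)
      show "h b \<omega> \<le> h a \<omega>" if "\<omega> \<in> space M" for \<omega>
        unfolding h_def using assms(3)[OF that] ab by (intro mono_pt) auto
    qed
    then have "lam * integral\<^sup>L M (h b) \<le> lam * integral\<^sup>L M (h a)"
      by (rule mult_left_mono) (use assms(12) in simp)
    then show ?thesis unfolding Phi_eq by linarith
  qed
  define cs where "cs = nonneg_root (Phi M lam r X)"
  have cs: "cs \<ge> 0" "Phi M lam r X cs = 0"
    using root_lemma(1)[OF Phi_cont Phi0 Phidec] unfolding cs_def by auto
  define \<mu> where "\<mu> = integral\<^sup>L M (h cs)"
  have cs_eq: "cs = lam * \<mu>" using cs(2) unfolding Phi_eq \<mu>_def by simp
  have lnge: "ln (1 / \<delta>) \<ge> 0" using assms(13,14) by simp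
  define \<epsilon> where "\<epsilon> = (D - E) * sqrt (ln (1 / \<delta>) / (2 * real n))"
  have eps0: "\<epsilon> \<ge> 0" unfolding \<epsilon>_def using lnge assms(10,11) by simp
  define t where "t = lam * \<epsilon>"
  have t0: "t \<ge> 0" unfolding t_def using eps0 assms(12) by simp
  have thr: "lam * (D - E) * sqrt (ln (1 / \<delta>) / (2 * real n)) = t"
    unfolding t_def \<epsilon>_def by (simp add: mult.assoc)
  define S where "S = {\<omega> \<in> space M. Phi_emp lam r n (\<lambda>i. Xs i \<omega>) (cs + t) > 0}"
  have setEq: "{\<omega> \<in> space M. nonneg_root (Phi_emp lam r n (\<lambda>i. Xs i \<omega>))
                          - nonneg_root (Phi M lam r X)
                        > lam * (D - E) * sqrt (ln (1 / \<delta>) / (2 * real n))} = S"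
  proof -
    have *: "nonneg_root (Phi_emp lam r n (\<lambda>i. Xs i \<omega>)) - cs > t \<longleftrightarrow> Phi_emp lam r n (\<lambda>i. Xs i \<omega>) (cs + t) > 0"
      if "\<omega> \<in> space M" for \<omega>
    proof -
      have x0: "\<And>i. 0 \<le> Xs i \<omega>" using assms(5)[OF that] by auto
      have a0: "0 \<le> cs + t" using cs(1) t0 by linarith
      have "nonneg_root (Phi_emp lam r n (\<lambda>i. Xs i \<omega>)) > cs + t \<longleftrightarrow> Phi_emp lam r n (\<lambda>i. Xs i \<omega>) (cs + t) > 0"
        using root_lemma(2)[OF Phi_emp_props[OF assms(12) x0] a0] .
      then show ?thesis by linarith
    qed
    show ?thesis unfolding S_def thr cs_def[symmetric] using * by blast
  qed
  have Sm: "S \<in> sets M" unfolding S_def Phi_emp_def pos_part_def by measurable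
  have "measure M S \<le> \<delta>"
  proof (cases "D = 0")
    case True
    have "S = {}"
    proof -
      have "\<not> Phi_emp lam r n (\<lambda>i. Xs i \<omega>) (cs + t) > 0" if \<omega>: "\<omega> \<in> space M" for \<omega>
      proof -
        have "pos_part (r (Xs i \<omega>) - (cs + t) * Xs i \<omega>) \<le> 0" for i
        proof -
          have "0 \<le> Xs i \<omega>" "r (Xs i \<omega>) \<le> 0" using assms(5)[OF \<omega>, of i] assms(9)[of "Xs i \<omega>"] True by auto
          moreover have "0 \<le> (cs + t) * Xs i \<omega>" using calculation cs t0 by simp
          ultimately show ?thesis by (simp add: pos_part_def)
        qed
        then have "(\<Sum>i<n. pos_part (r (Xs i \<omega>) - (cs + t) * Xs i \<omega>)) \<le> 0" by (intro sum_nonpos)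
        then have s2: "(1 / real n) * (\<Sum>i<n. pos_part (r (Xs i \<omega>) - (cs + t) * Xs i \<omega>)) \<le> 0"
          by (simp add: divide_nonpos_nonneg)
        have "lam * ((1 / real n) * (\<Sum>i<n. pos_part (r (Xs i \<omega>) - (cs + t) * Xs i \<omega>))) \<le> 0"
          using mult_nonneg_nonpos[of lam, OF _ s2] assms(12) by linarith
        then show ?thesis unfolding Phi_emp_def using cs t0 by linarith
      qed
      then show ?thesis unfolding S_def by blast
    qed
    then show ?thesis using assms(13) by simp
  next
    case False
    then have ED: "E < D" using assms(10,11) by linarith
    define g where "g = (\<lambda>x. pos_part (r' x - cs * x))"
    have gm[measurable]: "g \<in> borel_measurable borel" unfolding g_def pos_part_def by measurable
    define Y where "Y = (\<lambda>i \<omega>. g (Xs i \<omega>))"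
    have Ym[measurable]: "Y i \<in> borel_measurable M" for i unfolding Y_def by measurable
    interpret H: Hoeffding_ineq_iid M "{..<n}" Y "\<lambda>\<omega>. g (X \<omega>)" E D "expectation (\<lambda>\<omega>. g (X \<omega>))"
    proof unfold_locales
      show "finite {..<n}" by simp
      show "indep_vars (\<lambda>_. borel) Y {..<n}"
        unfolding Y_def by (rule indep_vars_compose2[OF indep_vars_subset[OF assms(6)]]) auto
      show "distr M borel (Y i) = distr M borel (\<lambda>\<omega>. g (X \<omega>))" if "i \<in> {..<n}" for i
      proof -
        have "distr M borel (Y i) = distr (distr M borel (Xs i)) borel g"
          unfolding Y_def by (subst distr_distr) (auto simp: comp_def)
        also have "\<dots> = distr (distr M borel X) borel g" by (simp add: assms(7))
        also have "\<dots> = distr M borel (\<lambda>\<omega>. g (X \<omega>))" by (subst distr_distr) (auto simp: comp_def)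
        finally show ?thesis .
      qed
      show "random_variable borel (\<lambda>\<omega>. g (X \<omega>))" by measurable
      show "AE x in M. g (X x) \<in> {E..D}"
      proof (rule AE_I2)
        fix \<omega> assume \<omega>: "\<omega> \<in> space M"
        have X: "X \<omega> \<in> {0..C}" using assms(3)[OF \<omega>] .
        then have rr: "r' (X \<omega>) = r (X \<omega>)" "E \<le> r (X \<omega>)" "r (X \<omega>) \<le> D" using assms(9)[of "X \<omega>"] by (auto simp: r'_def)
        have "0 \<le> cs * X \<omega>" using X cs by simp
        then show "g (X \<omega>) \<in> {E..D}" unfolding g_def pos_part_def using rr assms(10,11) by auto
      qed
    qed
    have gX: "expectation (\<lambda>\<omega>. g (X \<omega>)) = \<mu>"
      unfolding \<mu>_def h_def g_def
      by (rule Bochner_Integration.integral_cong[OF refl]) (use assms(3) in \<open>auto simp: r'_def\<close>)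
    have "0 \<in> {..<n}" using assms(15) by simp
    then have "{..<n} \<noteq> {}" by blast
    from H.Hoeffding_ineq_ge'[OF eps0 ED this]
    have hoef: "prob {x \<in> space M. (\<Sum>i\<in>{..<n}. Y i x) / real n \<ge> \<mu> + \<epsilon>} \<le> exp (-2 * real n * \<epsilon>\<^sup>2 / (D - E)\<^sup>2)"
      unfolding gX by simp
    have "\<epsilon>\<^sup>2 = (D - E)\<^sup>2 * (ln (1 / \<delta>) / (2 * real n))"
      unfolding \<epsilon>_def using lnge by (simp add: power_mult_distrib)
    then have "-2 * real n * \<epsilon>\<^sup>2 / (D - E)\<^sup>2 = ln \<delta>"
      using ED assms(13,15) by (simp add: ln_div field_simps)
    then have hoef2: "prob {x \<in> space M. (\<Sum>i\<in>{..<n}. Y i x) / real n \<ge> \<mu> + \<epsilon>} \<le> \<delta>"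
      using hoef assms(13) by simp
    have sub: "S \<subseteq> {x \<in> space M. (\<Sum>i\<in>{..<n}. Y i x) / real n \<ge> \<mu> + \<epsilon>}"
    proof
      fix \<omega> assume "\<omega> \<in> S"
      then have \<omega>: "\<omega> \<in> space M" and pos: "Phi_emp lam r n (\<lambda>i. Xs i \<omega>) (cs + t) > 0" unfolding S_def by auto
      have x0: "\<And>i. 0 \<le> Xs i \<omega>" using assms(5)[OF \<omega>] by auto
      have "Phi_emp lam r n (\<lambda>i. Xs i \<omega>) (cs + t) \<le> Phi_emp lam r n (\<lambda>i. Xs i \<omega>) cs - (cs + t - cs)"
        by (rule Phi_emp_props(3)[OF assms(12) x0]) (use cs t0 in linarith)+
      then have "Phi_emp lam r n (\<lambda>i. Xs i \<omega>) cs > t" using pos by linarith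
      moreover have "(\<Sum>i<n. Y i \<omega>) = (\<Sum>i<n. pos_part (r (Xs i \<omega>) - cs * Xs i \<omega>))"
        unfolding Y_def g_def using assms(5)[OF \<omega>] by (intro sum.cong) (auto simp: r'_def)
      ultimately have "lam * ((\<Sum>i<n. Y i \<omega>) / real n) > lam * (\<mu> + \<epsilon>)"
        unfolding Phi_emp_def cs_eq t_def by (simp add: algebra_simps)
      then have "(\<Sum>i<n. Y i \<omega>) / real n > \<mu> + \<epsilon>" using assms(12) by (metis mult_less_cancel_left_pos)
      then show "\<omega> \<in> {x \<in> space M. (\<Sum>i\<in>{..<n}. Y i x) / real n \<ge> \<mu> + \<epsilon>}" using \<omega> by simp
    qed
    have "measure M S \<le> prob {x \<in> space M. (\<Sum>i\<in>{..<n}. Y i x) / real n \<ge> \<mu> + \<epsilon>}"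
      by (rule finite_measure_mono[OF sub]) measurable
    then show ?thesis using hoef2 by linarith
  qed
  then show ?thesis using Sm unfolding setEq by blast
qed

end
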